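(* A matrix $E\in \mathbb{C}^{m\times m}$ is idempotent ($E^2=E$) if and only if there exist positive integers $p,q$ and matrices $U\in \mathbb{C}^{m\times p}$, $V\in \mathbb{C}^{q\times m}$ such that $E=U(VU)^{\dagger}V$.
   Context: $A^{\dagger}$ denotes the Moore–Penrose inverse of a matrix $A$, i.e. the unique matrix $X$ with $AXA=A$, $XAX=X$, $(AX)^*=AX$, $(XA)^*=XA$, where $^*$ denotes conjugate transpose. *)

theory Defs
  imports "Jordan_Normal_Form.Matrix"
begin

definition ctrans :: "complex mat \<Rightarrow> complex mat" where
  "ctrans A = mat (dim_col A) (dim_row A) (\<lambda>(i,j). cnj (A $$ (j,i)))"

definition is_MP_inverse :: "complex mat \<Rightarrow> complex mat \<Rightarrow> bool" where
  "is_MP_inverse A X \<longleftrightarrow>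
     X \<in> carrier_mat (dim_col A) (dim_row A) \<and>
     A * X * A = A \<and> X * A * X = X \<and>
     ctrans (A * X) = A * X \<and> ctrans (X * A) = X * A"

definition MP_inverse :: "complex mat \<Rightarrow> complex mat" where
  "MP_inverse A = (THE X. is_MP_inverse A X)"

end

theory Submission
  imports Defs "Jordan_Normal_Form.Gauss_Jordan_Elimination"
begin


lemma ctrans_carrier[simp]: "ctrans A \<in> carrier_mat (dim_col A) (dim_row A)"
  unfolding ctrans_def by auto
lemma ctrans_dims[simp]: "dim_row (ctrans A) = dim_col A" "dim_col (ctrans A) = dim_row A"
  unfolding ctrans_def by auto
lemma ctrans_index[simp]: "i < dim_col A \<Longrightarrow> j < dim_row A \<Longrightarrow> ctrans A $$ (i,j) = cnj (A $$ (j,i))"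
  unfolding ctrans_def by auto
lemma ctrans_carrier'[intro]: "A \<in> carrier_mat n k \<Longrightarrow> ctrans A \<in> carrier_mat k n"
  by auto
lemma ctrans_ctrans[simp]: "ctrans (ctrans A) = A"
  by (rule eq_matI) auto

lemma ctrans_mult: assumes "dim_col A = dim_row B"
  shows "ctrans (A * B) = ctrans B * ctrans A"
proof (rule eq_matI)
  fix i j assume i: "i < dim_row (ctrans B * ctrans A)" and j: "j < dim_col (ctrans B * ctrans A)"
  have "ctrans (A*B) $$ (i,j) = cnj (\<Sum>k<dim_row B. A $$ (j,k) * B $$ (k,i))"
    using i j assms by (simp add: scalar_prod_def lessThan_atLeast0)
  also have "\<dots> = (\<Sum>k<dim_row B. cnj (B $$ (k,i)) * cnj (A $$ (j,k)))"
    by (simp add: cnj_sum mult.commute)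
  also have "\<dots> = (ctrans B * ctrans A) $$ (i,j)"
    using i j assms by (simp add: scalar_prod_def lessThan_atLeast0)
  finally show "ctrans (A * B) $$ (i, j) = (ctrans B * ctrans A) $$ (i, j)" .
qed (use assms in auto)

lemma ctrans_zero[simp]: "ctrans (0\<^sub>m n k) = 0\<^sub>m k n"
  by (rule eq_matI) auto
lemma ctrans_one[simp]: "ctrans (1\<^sub>m n) = 1\<^sub>m n"
  by (rule eq_matI) auto

lemma ctrans_self_zero: assumes M: "M \<in> carrier_mat n k" and z: "ctrans M * M = 0\<^sub>m k k"
  shows "M = 0\<^sub>m n k"
proof (rule eq_matI)
  fix i j assume i: "i < dim_row (0\<^sub>m n k)" and j: "j < dim_col (0\<^sub>m n k)"
  have "(ctrans M * M) $$ (j,j) = 0" using z i j by simp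
  hence "(\<Sum>l<n. cnj (M $$ (l,j)) * M $$ (l,j)) = 0"
    using M i j by (simp add: scalar_prod_def lessThan_atLeast0)
  moreover have "\<And>z. cnj z * z = complex_of_real ((cmod z)^2)"
    by (metis complex_norm_square mult.commute)
  ultimately have s: "(\<Sum>l<n. complex_of_real ((cmod (M $$ (l,j)))^2)) = 0"
    by simp
  hence "(\<Sum>l<n. (cmod (M $$ (l,j)))^2) = 0"
    by (metis of_real_eq_0_iff of_real_sum)
  hence "\<forall>l\<in>{..<n}. (cmod (M $$ (l,j)))^2 = 0"
    by (subst sum_nonneg_eq_0_iff[symmetric]) auto
  thus "M $$ (i,j) = 0\<^sub>m n k $$ (i,j)" using i j by auto
qed (use M in auto)



lemma massoc: "dim_col A = dim_row B \<Longrightarrow> dim_col B = dim_row C \<Longrightarrow> A * B * C = A * (B * C)"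
  by (rule assoc_mult_mat[of A "dim_row A" "dim_col A" B "dim_col B" C "dim_col C"]) auto

lemma g_inverse_exists:
  fixes A :: "'a :: field mat"
  assumes A: "A \<in> carrier_mat nr nc"
  shows "\<exists>G \<in> carrier_mat nc nr. A * G * A = A"
proof -
  define C where "C = gauss_jordan_single A"
  note gj = gauss_jordan_single[OF A C_def[symmetric]]
  have C: "C \<in> carrier_mat nr nc" by (rule gj(2))
  obtain f where pf: "pivot_fun C f nc" using gj(3) C unfolding row_echelon_form_def by auto
  obtain P Q where PQ: "C = P * A" "P \<in> carrier_mat nr nr" "Q \<in> carrier_mat nr nr"
    "P * Q = 1\<^sub>m nr" "Q * P = 1\<^sub>m nr" using gj(4) by blast
  have dC: "dim_row C = nr" using C by auto
  note pv = pivot_funD[OF dC pf]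
  define S where "S = mat nc nr (\<lambda>(j,i). if f i < nc \<and> j = f i then 1 else (0::'a))"
  have S: "S \<in> carrier_mat nc nr" unfolding S_def by auto
  have CS: "C * S = mat nr nr (\<lambda>(i,l). if f l < nc \<and> i = l then 1 else 0)"
  proof (rule eq_matI)
    fix i l assume i: "i < dim_row (mat nr nr (\<lambda>(i,l). if f l < nc \<and> i = l then 1 else (0::'a)))"
      and l: "l < dim_col (mat nr nr (\<lambda>(i,l). if f l < nc \<and> i = l then 1 else (0::'a)))"
    have "(C * S) $$ (i,l) = (\<Sum>j\<in>{0..<nc}. C $$ (i,j) * S $$ (j,l))"
      using i l C S by (simp add: scalar_prod_def)
    also have "\<dots> = (\<Sum>j\<in>{0..<nc}. if j = f l \<and> f l < nc then C $$ (i,j) else 0)"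
      using l by (intro sum.cong) (auto simp: S_def)
    also have "\<dots> = (if f l < nc then C $$ (i, f l) else 0)"
      by (cases "f l < nc") (auto simp: sum.delta)
    also have "\<dots> = (if f l < nc \<and> i = l then 1 else 0)"
      using pv(4)[of l] pv(5)[of l i] i l by auto
    finally show "(C * S) $$ (i,l) = mat nr nr (\<lambda>(i,l). if f l < nc \<and> i = l then 1 else 0) $$ (i,l)"
      using i l by simp
  qed (use C S in auto)
  have CSC: "C * S * C = C"
  proof (rule eq_matI)
    fix i k assume i: "i < dim_row C" and k: "k < dim_col C"
    have "(C * S * C) $$ (i,k) = (\<Sum>l\<in>{0..<nr}. (if f l < nc \<and> i = l then 1 else 0) * C $$ (l,k))"
      using i k C unfolding CS by (simp add: scalar_prod_def)
    also have "\<dots> = (\<Sum>l\<in>{0..<nr}. if l = i \<and> f i < nc then C $$ (l,k) else 0)"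
      using i C by (intro sum.cong) auto
    also have "\<dots> = (if f i < nc then C $$ (i,k) else 0)"
      using i C by (cases "f i < nc") (auto simp: sum.delta)
    also have "\<dots> = C $$ (i,k)"
    proof -
      have "f i \<le> nc" using pv(1) i C by auto
      moreover have "f i = nc \<Longrightarrow> C $$ (i,k) = 0" using pv(2)[of i k] i k C by auto
      ultimately show ?thesis by auto
    qed
    finally show "(C * S * C) $$ (i,k) = C $$ (i,k)" .
  qed (use C S in auto)
  have AQC: "A = Q * C"
  proof -
    have "Q * C = Q * P * A" using PQ A by (simp add: assoc_mult_mat[symmetric])
    also have "\<dots> = A" using PQ(5) A by simp
    finally show ?thesis by simp
  qed
  have "A * (S * P) * A = Q * (C * S * (P * Q) * C)"
    using PQ C S unfolding AQC by (simp add: massoc)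
  also have "\<dots> = Q * (C * S * C)" using PQ C S by simp
  also have "\<dots> = A" using CSC AQC by simp
  finally show ?thesis using S PQ by (intro bexI[of _ "S * P"]) auto
qed



lemma cancel_left:
  assumes A: "A \<in> carrier_mat n k" and Z1: "Z1 \<in> carrier_mat k l" and Z2: "Z2 \<in> carrier_mat k l"
    and eq: "ctrans A * A * Z1 = ctrans A * A * Z2"
  shows "A * Z1 = A * Z2"
proof -
  define D where "D = Z1 - Z2"
  have D: "D \<in> carrier_mat k l" using Z1 Z2 unfolding D_def by auto
  have HD: "ctrans A * A * D = 0\<^sub>m k l"
  proof -
    have "ctrans A * A * D = ctrans A * A * Z1 - ctrans A * A * Z2"
      unfolding D_def using A Z1 Z2 by (intro mult_minus_distrib_mat) auto
    also have "\<dots> = 0\<^sub>m k l" unfolding eq using A Z2 by (intro minus_r_inv_mat) auto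
    finally show ?thesis .
  qed
  have "ctrans (A * D) * (A * D) = ctrans D * (ctrans A * A * D)"
    using A D by (simp add: ctrans_mult massoc)
  also have "\<dots> = 0\<^sub>m l l" using D unfolding HD by simp
  finally have "ctrans (A * D) * (A * D) = 0\<^sub>m l l" .
  moreover have "A * D \<in> carrier_mat n l" using A D by (rule mult_carrier_mat)
  ultimately have "A * D = 0\<^sub>m n l" using ctrans_self_zero by blast
  moreover have "A * D = A * Z1 - A * Z2" unfolding D_def using A Z1 Z2 by (intro mult_minus_distrib_mat) auto
  ultimately have z: "A * Z1 - A * Z2 = 0\<^sub>m n l" by simp
  show ?thesis
  proof (rule eq_matI)
    fix i j assume ij: "i < dim_row (A * Z2)" "j < dim_col (A * Z2)"
    hence ij': "i < n" "j < l" using A Z2 by auto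
    have "(A * Z1 - A * Z2) $$ (i,j) = 0" unfolding z using ij' by simp
    moreover have "(A * Z1 - A * Z2) $$ (i,j) = (A * Z1) $$ (i,j) - (A * Z2) $$ (i,j)"
      using ij' A Z1 Z2 by (intro index_minus_mat) auto
    ultimately show "(A * Z1) $$ (i,j) = (A * Z2) $$ (i,j)" by simp
  qed (use A Z1 Z2 in auto)
qed

lemma L1:
  assumes A: "A \<in> carrier_mat n k" and G: "G \<in> carrier_mat k k"
    and HGH: "ctrans A * A * G * (ctrans A * A) = ctrans A * A"
  shows "A * G * ctrans A * A = A"
proof -
  have "ctrans A * A * (G * ctrans A * A) = ctrans A * A * 1\<^sub>m k"
    using HGH A G by (simp add: massoc)
  hence "A * (G * ctrans A * A) = A * 1\<^sub>m k"
    using A G by (intro cancel_left[OF A]) auto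
  thus ?thesis using A G by (simp add: massoc)
qed


lemma inv123:
  assumes A: "A \<in> carrier_mat n k"
  shows "\<exists>Y \<in> carrier_mat k n. A * Y * A = A \<and> Y * A * Y = Y \<and> ctrans (A * Y) = A * Y"
proof -
  have H: "ctrans A * A \<in> carrier_mat k k" using A by auto
  obtain G where G: "G \<in> carrier_mat k k" and HGH: "ctrans A * A * G * (ctrans A * A) = ctrans A * A"
    using g_inverse_exists[OF H] by blast
  have G': "ctrans G \<in> carrier_mat k k" using G by auto
  have HGH': "ctrans A * A * ctrans G * (ctrans A * A) = ctrans A * A"
  proof -
    have "ctrans (ctrans A * A * G * (ctrans A * A)) = ctrans A * A * ctrans G * (ctrans A * A)"
      using A G by (simp add: ctrans_mult massoc)
    moreover have "ctrans (ctrans A * A) = ctrans A * A" by (simp add: ctrans_mult)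
    ultimately show ?thesis using HGH by metis
  qed
  have e1: "A * G * ctrans A * A = A" by (rule L1[OF A G HGH])
  have e2: "A * ctrans G * ctrans A * A = A" by (rule L1[OF A G' HGH'])
  have e3: "ctrans A * A * G * ctrans A = ctrans A"
  proof -
    have "ctrans (A * ctrans G * ctrans A * A) = ctrans A * A * G * ctrans A"
      using A G by (simp add: ctrans_mult massoc)
    thus ?thesis using e2 by simp
  qed
  define Y where "Y = G * ctrans A"
  have Y: "Y \<in> carrier_mat k n" using A G unfolding Y_def by auto
  have 1: "A * Y * A = A" using e1 A G unfolding Y_def by (simp add: massoc)
  have 2: "Y * A * Y = Y"
  proof -
    have "Y * A * Y = G * (ctrans A * A * G * ctrans A)" using A G unfolding Y_def by (simp add: massoc)
    thus ?thesis using e3 unfolding Y_def by simp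
  qed
  define P where "P = A * G * ctrans A"
  have Pc: "ctrans P = A * ctrans G * ctrans A" using A G unfolding P_def by (simp add: ctrans_mult massoc)
  have "ctrans P * P = (A * ctrans G * ctrans A) * P" using Pc by simp
  also have "\<dots> = A * ctrans G * (ctrans A * A * G * ctrans A)"
    unfolding P_def using A G by (simp add: massoc)
  finally have PP: "ctrans P * P = ctrans P" using e3 Pc by simp
  have "ctrans (ctrans P * P) = ctrans P * P" using A G unfolding P_def by (simp add: ctrans_mult)
  hence "ctrans P = P" using PP by (metis ctrans_ctrans)
  moreover have "P = A * Y" using A G unfolding P_def Y_def by (simp add: massoc)
  ultimately show ?thesis using 1 2 Y by auto
qed


lemma MP_exists:
  assumes A: "A \<in> carrier_mat n k"
  shows "\<exists>X. is_MP_inverse A X"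
proof -
  obtain Y where Y: "Y \<in> carrier_mat k n" and Y1: "A * Y * A = A" and Y2: "Y * A * Y = Y"
    and Y3: "ctrans (A * Y) = A * Y" using inv123[OF A] by blast
  have A': "ctrans A \<in> carrier_mat k n" using A by auto
  obtain W where W: "W \<in> carrier_mat n k" and W1: "ctrans A * W * ctrans A = ctrans A"
    and W2: "W * ctrans A * W = W" and W3: "ctrans (ctrans A * W) = ctrans A * W"
    using inv123[OF A'] by blast
  define Z where "Z = ctrans W"
  have Z: "Z \<in> carrier_mat k n" using W unfolding Z_def by auto
  have Z1: "A * Z * A = A"
  proof -
    have "ctrans (ctrans A * W * ctrans A) = A * Z * A" using A W unfolding Z_def by (simp add: ctrans_mult massoc)
    thus ?thesis using W1 by simp
  qed
  have Z2: "Z * A * Z = Z"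
  proof -
    have "ctrans (W * ctrans A * W) = Z * A * Z" using A W unfolding Z_def by (simp add: ctrans_mult massoc)
    thus ?thesis using W2 unfolding Z_def by simp
  qed
  have Z3: "ctrans (Z * A) = Z * A"
  proof -
    have "ctrans (ctrans A * W) = Z * A" using A W unfolding Z_def by (simp add: ctrans_mult)
    thus ?thesis using W3 by simp
  qed
  define X where "X = Z * A * Y"
  have X: "X \<in> carrier_mat k n" using Z A Y unfolding X_def by auto
  have AX: "A * X = A * Y"
  proof -
    have "A * X = (A * Z * A) * Y" using A Z Y unfolding X_def by (simp add: massoc)
    thus ?thesis using Z1 by simp
  qed
  have XA: "X * A = Z * A"
  proof -
    have "X * A = Z * (A * Y * A)" using A Z Y unfolding X_def by (simp add: massoc)
    thus ?thesis using Y1 by simp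
  qed
  have 1: "A * X * A = A" using AX Y1 by simp
  have 2: "X * A * X = X"
  proof -
    have "X * A * X = Z * A * (Z * A * Y)" using XA unfolding X_def by simp
    also have "\<dots> = (Z * A * Z) * A * Y" using A Z Y by (simp add: massoc)
    finally show ?thesis using Z2 unfolding X_def by simp
  qed
  show ?thesis unfolding is_MP_inverse_def using X A 1 2 AX XA Y3 Z3 by auto
qed

lemma MP_unique:
  assumes "is_MP_inverse A X" "is_MP_inverse A Y"
  shows "X = Y"
proof -
  define n k where "n = dim_row A" and "k = dim_col A"
  have A: "A \<in> carrier_mat n k" unfolding n_def k_def by auto
  from assms have X: "X \<in> carrier_mat k n" and X1: "A * X * A = A" and X2: "X * A * X = X"
    and X3: "ctrans (A * X) = A * X" and X4: "ctrans (X * A) = X * A"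
    unfolding is_MP_inverse_def n_def k_def by auto
  from assms have Y: "Y \<in> carrier_mat k n" and Y1: "A * Y * A = A" and Y2: "Y * A * Y = Y"
    and Y3: "ctrans (A * Y) = A * Y" and Y4: "ctrans (Y * A) = Y * A"
    unfolding is_MP_inverse_def n_def k_def by auto
  have dA: "dim_row A = n" "dim_col A = k" using A by auto
  have dX: "dim_row X = k" "dim_col X = n" using X by auto
  have dY: "dim_row Y = k" "dim_col Y = n" using Y by auto
  have AX: "A * X = A * Y"
  proof -
    have "A * X = ctrans (A * X)" using X3 by simp
    also have "\<dots> = ctrans (A * Y * A * X)" using Y1 by simp
    also have "A * Y * A * X = (A * Y) * (A * X)" by (rule massoc) (simp_all add: dA dX dY)
    also have "ctrans ((A * Y) * (A * X)) = ctrans (A * X) * ctrans (A * Y)" by (rule ctrans_mult) (simp_all add: dA dX dY)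
    also have "\<dots> = A * X * (A * Y)" using X3 Y3 by simp
    also have "\<dots> = A * X * A * Y" by (rule massoc[symmetric]) (simp_all add: dA dX dY)
    also have "\<dots> = A * Y" using X1 by simp
    finally show "A * X = A * Y" .
  qed
  have XA: "X * A = Y * A"
  proof -
    have "X * A = ctrans (X * A)" using X4 by simp
    also have "\<dots> = ctrans (X * (A * Y * A))" using Y1 by simp
    also have "X * (A * Y * A) = (X * A) * (Y * A)"
    proof -
      have "A * Y * A = A * (Y * A)" by (rule massoc) (simp_all add: dA dX dY)
      moreover have "X * (A * (Y * A)) = X * A * (Y * A)" by (rule massoc[symmetric]) (simp_all add: dA dX dY)
      ultimately show ?thesis by simp
    qed
    also have "ctrans ((X * A) * (Y * A)) = ctrans (Y * A) * ctrans (X * A)" by (rule ctrans_mult) (simp_all add: dA dX dY)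
    also have "\<dots> = Y * A * (X * A)" using X4 Y4 by simp
    also have "\<dots> = Y * (A * (X * A))" by (rule massoc) (simp_all add: dA dX dY)
    also have "A * (X * A) = A * X * A" by (rule massoc[symmetric]) (simp_all add: dA dX dY)
    also have "Y * (A * X * A) = Y * A" using X1 by simp
    finally show "X * A = Y * A" .
  qed
  have "X = X * A * X" using X2 by simp
  also have "\<dots> = Y * A * X" using XA by simp
  also have "\<dots> = Y * (A * X)" by (rule massoc) (simp_all add: dA dX dY)
  also have "\<dots> = Y * (A * Y)" using AX by simp
  also have "\<dots> = Y * A * Y" by (rule massoc[symmetric]) (simp_all add: dA dX dY)
  also have "\<dots> = Y" using Y2 by simp
  finally show ?thesis .
qed

lemma MP_inverse_prop:
  assumes A: "A \<in> carrier_mat n k"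
  shows "is_MP_inverse A (MP_inverse A)"
  unfolding MP_inverse_def
  using MP_exists[OF A] MP_unique by (metis theI)


theorem proposition2:
  fixes E :: "complex mat" and m :: nat
  assumes "E \<in> carrier_mat m m"
  shows "E * E = E \<longleftrightarrow>
    (\<exists>p q :: nat. \<exists>U V :: complex mat. p > 0 \<and> q > 0 \<and>
       U \<in> carrier_mat m p \<and> V \<in> carrier_mat q m \<and>
       E = U * MP_inverse (V * U) * V)"
proof
  assume EE: "E * E = E"
  show "\<exists>p q :: nat. \<exists>U V :: complex mat. p > 0 \<and> q > 0 \<and>
       U \<in> carrier_mat m p \<and> V \<in> carrier_mat q m \<and>
       E = U * MP_inverse (V * U) * V"
  proof (cases "m = 0")
    case True
    have "E = 0\<^sub>m 0 1 * MP_inverse (0\<^sub>m 1 0 * 0\<^sub>m 0 1) * 0\<^sub>m 1 0"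
      by (rule eq_matI) (use assms True in auto)
    thus ?thesis using True by (intro exI[of _ 1] exI[of _ "0\<^sub>m 0 1"] exI[of _ "0\<^sub>m 1 0"]) auto
  next
    case False
    have "is_MP_inverse E (MP_inverse E)" by (rule MP_inverse_prop[OF assms])
    hence "E * MP_inverse E * E = E" unfolding is_MP_inverse_def by auto
    hence "E = E * MP_inverse (E * E) * E" using EE by simp
    thus ?thesis using False assms by (intro exI[of _ m] exI[of _ E]) auto
  qed
next
  assume "\<exists>p q :: nat. \<exists>U V :: complex mat. p > 0 \<and> q > 0 \<and>
       U \<in> carrier_mat m p \<and> V \<in> carrier_mat q m \<and>
       E = U * MP_inverse (V * U) * V"
  then obtain p q U V where U: "U \<in> carrier_mat m p" and V: "V \<in> carrier_mat q m"
    and Edef: "E = U * MP_inverse (V * U) * V" by blast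
  define X where "X = MP_inverse (V * U)"
  have VU: "V * U \<in> carrier_mat q p" using U V by auto
  have "is_MP_inverse (V * U) X" unfolding X_def by (rule MP_inverse_prop[OF VU])
  hence X: "X \<in> carrier_mat p q" and X2: "X * (V * U) * X = X"
    unfolding is_MP_inverse_def using U V by auto
  have dU: "dim_row U = m" "dim_col U = p" using U by auto
  have dV: "dim_row V = q" "dim_col V = m" using V by auto
  have dX: "dim_row X = p" "dim_col X = q" using X by auto
  have "E * E = U * (X * (V * U) * X) * V"
    unfolding Edef X_def[symmetric] by (simp add: massoc dU dV dX)
  also have "\<dots> = U * X * V" using X2 by simp
  also have "\<dots> = E" unfolding Edef X_def ..
  finally show "E * E = E" .
qed

end
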